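(* Let $N_0,N_1\ge 0$ with $N_0+N_1=N$. The square matrix $M=M(N_0,N_1)$, with rows and columns indexed by the words of length $N$ having $N_0$ zeros and $N_1$ ones, with entry $M_{w,w'}=q^{g(w,w')}$ if $w'$ is feasible for $w$ and $M_{w,w'}=0$ otherwise ($q$ an indeterminate), is invertible.
   Context: A link pattern on a finite totally ordered set is a partition into pairs that are pairwise noncrossing (no $i<j<k<\ell$ with $\{i,k\}$ and $\{j,\ell\}$ both pairs). An extended link pattern $\pi$ on $\{1,\dots,N\}$ consists of integers $\ell_1<\dots<\ell_a$ (left points) and $r_1<\dots<r_b\le N$ (right points), with every left point smaller than every right point, together with a link pattern on each maximal interval of integers of $\{1,\dots,N\}$ containing no left or right point. Its word $\mathbf w(\pi)\in\{0,1\}^N$ has $w_{\ell_k}=1$, $w_{r_k}=0$, and for each pair $\{i<j\}$ of the link patterns $w_i=0$, $w_j=1$; $\mathbf w$ is a bijection onto $\{0,1\}^N$. A directed extended link pattern is an extended link pattern in which, in each pair of the link patterns, one element is declared the source and the other the sink; left points are sinks and right points are sources. $RL$ of it is the number of pairs whose larger element is the source. Its source-sink word $w$ has $w_i=0$ iff $i$ is a source. A word $w'$ is feasible for $w$ if there exists a directed extended link pattern whose underlying extended link pattern is $\mathbf w^{-1}(w')$ and whose source-sink word is $w$; this directed pattern is then unique and $g(w,w')$ is its $RL$. *)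

theory Defs
  imports "HOL-Computational_Algebra.Polynomial"
begin

(* Positions are 0,...,N-1 (the paper uses 1,...,N). A pair {i<j} is stored as (i,j). *)

definition noncrossing :: "(nat \<times> nat) set \<Rightarrow> bool" where
  "noncrossing P \<longleftrightarrow>
     (\<forall>(i,k)\<in>P. \<forall>(j,l)\<in>P. \<not> (i < j \<and> j < k \<and> k < l))"

(* extended link pattern on {0..<N}: left points L, right points R, pairs P *)
definition ext_link_pattern :: "nat \<Rightarrow> nat set \<Rightarrow> nat set \<Rightarrow> (nat \<times> nat) set \<Rightarrow> bool" where
  "ext_link_pattern N L R P \<longleftrightarrow>
     L \<subseteq> {..<N} \<and> R \<subseteq> {..<N} \<and>
     (\<forall>l\<in>L. \<forall>r\<in>R. l < r) \<and>
     (\<forall>(i,j)\<in>P. i < j \<and> j < N \<and> i \<notin> L \<union> R \<and> j \<notin> L \<union> R) \<and>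
     (\<forall>x\<in>{..<N} - (L \<union> R). \<exists>!p. p \<in> P \<and> (x = fst p \<or> x = snd p)) \<and>
     noncrossing P \<and>
     (\<forall>(i,j)\<in>P. \<forall>x\<in>L \<union> R. \<not> (i < x \<and> x < j))"

definition elp_word :: "nat \<Rightarrow> nat set \<Rightarrow> nat set \<Rightarrow> (nat \<times> nat) set \<Rightarrow> nat list" where
  "elp_word N L R P = map (\<lambda>i. if i \<in> L then 1 else if i \<in> R then 0
                              else if (\<exists>j. (i,j) \<in> P) then 0 else 1) [0..<N]"

(* A directed extended link pattern is (L,R,P,S) with S \<subseteq> P the set of pairs whose
   larger element is the source (in pairs of P - S the smaller element is the source).
   Its RL is card S. Source-sink word: entry 0 iff the position is a source. *)
definition ss_word :: "nat \<Rightarrow> nat set \<Rightarrow> nat set \<Rightarrow> (nat \<times> nat) set \<Rightarrow> (nat \<times> nat) set \<Rightarrow> nat list" where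
  "ss_word N L R P S = map (\<lambda>i. if i \<in> R \<or> (\<exists>j. (i,j) \<in> P - S) \<or> (\<exists>j. (j,i) \<in> S)
                               then 0 else 1) [0..<N]"

definition feasible :: "nat \<Rightarrow> nat list \<Rightarrow> nat list \<Rightarrow> bool" where
  "feasible N w w' \<longleftrightarrow>
     (\<exists>L R P S. ext_link_pattern N L R P \<and> S \<subseteq> P \<and>
                elp_word N L R P = w' \<and> ss_word N L R P S = w)"

definition g :: "nat \<Rightarrow> nat list \<Rightarrow> nat list \<Rightarrow> nat" where
  "g N w w' = (THE k. \<exists>L R P S. ext_link_pattern N L R P \<and> S \<subseteq> P \<and>
                elp_word N L R P = w' \<and> ss_word N L R P S = w \<and> card S = k)"

definition words :: "nat \<Rightarrow> nat \<Rightarrow> nat list set" where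
  "words N0 N1 = {w. length w = N0 + N1 \<and> set w \<subseteq> {0,1} \<and>
                     length (filter (\<lambda>x. x = 0) w) = N0}"

definition M :: "nat \<Rightarrow> nat \<Rightarrow> nat list \<Rightarrow> nat list \<Rightarrow> int poly" where
  "M N0 N1 w w' = (if feasible (N0 + N1) w w' then [:0, 1:] ^ g (N0 + N1) w w' else 0)"

definition invertible_on :: "'i set \<Rightarrow> ('i \<Rightarrow> 'i \<Rightarrow> 'a::comm_ring_1) \<Rightarrow> bool" where
  "invertible_on I A \<longleftrightarrow>
     (\<exists>B. (\<forall>x\<in>I. \<forall>y\<in>I. (\<Sum>z\<in>I. A x z * B z y) = (if x = y then 1 else 0)) \<and>
          (\<forall>x\<in>I. \<forall>y\<in>I. (\<Sum>z\<in>I. B x z * A z y) = (if x = y then 1 else 0)))"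

end

theory Submission
  imports Defs "HOL-Library.List_Lexorder"
begin


lemma tri_invertible:
  fixes A :: "'a::linorder \<Rightarrow> 'a \<Rightarrow> 'b::comm_ring_1"
  assumes "finite I"
    and diag: "\<And>x. x \<in> I \<Longrightarrow> A x x = 1"
    and tri: "\<And>x y. x \<in> I \<Longrightarrow> y \<in> I \<Longrightarrow> A x y \<noteq> 0 \<Longrightarrow> x = y \<or> y < x"
  shows "invertible_on I A"
  using assms
proof (induction "card I" arbitrary: I)
  case 0
  then have "I = {}" by simp
  then show ?case unfolding invertible_on_def by simp
next
  case (Suc n)
  then have ne: "I \<noteq> {}" by auto
  define m where "m = Max I"
  have mI: "m \<in> I" using Suc.prems ne m_def by simp
  have mmax: "\<And>x. x \<in> I \<Longrightarrow> x \<le> m" using Suc.prems m_def by simp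
  define I' where "I' = I - {m}"
  have fI': "finite I'" using Suc.prems I'_def by simp
  have cI': "n = card I'" using Suc.hyps(2) mI I'_def Suc.prems(1) by simp
  have "invertible_on I' A"
    by (rule Suc.hyps(1)[OF cI' fI']) (use Suc.prems I'_def in auto)
  then obtain B' where
    B1: "\<forall>x\<in>I'. \<forall>y\<in>I'. (\<Sum>z\<in>I'. A x z * B' z y) = (if x = y then 1 else 0)" and
    B2: "\<forall>x\<in>I'. \<forall>y\<in>I'. (\<Sum>z\<in>I'. B' x z * A z y) = (if x = y then 1 else 0)"
    unfolding invertible_on_def by blast
  have col: "\<And>x. x \<in> I' \<Longrightarrow> A x m = 0"
  proof -
    fix x assume x: "x \<in> I'"
    then have "x \<in> I" "x \<noteq> m" "x \<le> m" using I'_def mmax by auto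
    then show "A x m = 0" using Suc.prems(3)[of x m] mI by fastforce
  qed
  define B where "B x y = (if x = m then (if y = m then 1 else - (\<Sum>u\<in>I'. A m u * B' u y))
      else if y = m then 0 else B' x y)" for x y
  have sumI: "\<And>f. (\<Sum>z\<in>I. f z) = f m + (\<Sum>z\<in>I'. f z)"
    using Suc.prems(1) mI I'_def by (simp add: sum.remove)
  have mI': "m \<notin> I'" using I'_def by simp
  have AB: "(\<Sum>z\<in>I. A x z * B z y) = (if x = y then 1 else 0)" if x: "x \<in> I" and y: "y \<in> I" for x y
  proof -
    have s: "(\<Sum>z\<in>I'. A x z * B z y) = (\<Sum>z\<in>I'. A x z * (if y = m then 0 else B' z y))"
      using mI' B_def by (intro sum.cong) auto
    have Bmy: "B m y = (if y = m then 1 else - (\<Sum>u\<in>I'. A m u * B' u y))" using B_def by simp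
    have e: "(\<Sum>z\<in>I. A x z * B z y) = A x m * (if y = m then 1 else - (\<Sum>u\<in>I'. A m u * B' u y))
       + (\<Sum>z\<in>I'. A x z * (if y = m then 0 else B' z y))"
      unfolding sumI[of "\<lambda>z. A x z * B z y"] s Bmy ..
    show ?thesis
    proof (cases "x = m")
      case True
      then show ?thesis unfolding e using Suc.prems(2)[OF mI] by (cases "y = m") simp_all
    next
      case False
      then have xI': "x \<in> I'" using x I'_def by auto
      show ?thesis
      proof (cases "y = m")
        case True
        then show ?thesis unfolding e using False col[OF xI'] by simp
      next
        case False
        then have "y \<in> I'" using y I'_def by auto
        then show ?thesis unfolding e using B1 xI' col[OF xI'] False \<open>x \<noteq> m\<close> by simp
      qed
    qed
  qed
  have BA: "(\<Sum>z\<in>I. B x z * A z y) = (if x = y then 1 else 0)" if x: "x \<in> I" and y: "y \<in> I" for x y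
  proof (cases "x = m")
    case True
    show ?thesis
    proof (cases "y = m")
      case True
      then show ?thesis using \<open>x = m\<close> Suc.prems(2)[OF mI] col by (simp add: sumI B_def mI')
    next
      case False
      then have yI': "y \<in> I'" using y I'_def by auto
      have "(\<Sum>z\<in>I'. (\<Sum>u\<in>I'. A m u * B' u z) * A z y) = (\<Sum>u\<in>I'. A m u * (\<Sum>z\<in>I'. B' u z * A z y))"
      proof -
        have "(\<Sum>z\<in>I'. (\<Sum>u\<in>I'. A m u * B' u z) * A z y) = (\<Sum>z\<in>I'. \<Sum>u\<in>I'. A m u * B' u z * A z y)"
          by (simp only: sum_distrib_right)
        also have "\<dots> = (\<Sum>u\<in>I'. \<Sum>z\<in>I'. A m u * B' u z * A z y)"
          by (rule sum.swap)
        also have "\<dots> = (\<Sum>u\<in>I'. A m u * (\<Sum>z\<in>I'. B' u z * A z y))"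
          by (simp only: sum_distrib_left mult.assoc)
        finally show ?thesis .
      qed
      also have "\<dots> = (\<Sum>u\<in>I'. A m u * (if u = y then 1 else 0))"
        using B2 yI' by (intro sum.cong) auto
      also have "\<dots> = A m y" using yI' fI' by (simp add: if_distrib cong: if_cong)
      finally have eq: "(\<Sum>z\<in>I'. (\<Sum>u\<in>I'. A m u * B' u z) * A z y) = A m y" .
      have "(\<Sum>z\<in>I. B x z * A z y) = A m y + (\<Sum>z\<in>I'. - (\<Sum>u\<in>I'. A m u * B' u z) * A z y)"
      proof -
        have "(\<Sum>z\<in>I'. B x z * A z y) = (\<Sum>z\<in>I'. - (\<Sum>u\<in>I'. A m u * B' u z) * A z y)"
          using \<open>x = m\<close> mI' B_def by (intro sum.cong) auto
        moreover have "B x m * A m y = A m y" using \<open>x = m\<close> B_def by simp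
        ultimately show ?thesis by (simp only: sumI)
      qed
      also have "\<dots> = 0" using eq by (simp add: sum_negf)
      finally show ?thesis using False \<open>x = m\<close> by simp
    qed
  next
    case False
    then have xI': "x \<in> I'" using x I'_def by auto
    have Bx: "\<And>z. B x z = (if z = m then 0 else B' x z)" using False B_def by simp
    show ?thesis
    proof (cases "y = m")
      case True
      then show ?thesis using False col by (simp add: sumI Bx mI' cong: sum.cong)
    next
      case False
      then have "y \<in> I'" using y I'_def by auto
      moreover have "(\<Sum>z\<in>I'. B x z * A z y) = (\<Sum>z\<in>I'. B' x z * A z y)"
        using mI' Bx by (intro sum.cong) auto
      ultimately show ?thesis using B2 xI' \<open>x \<noteq> m\<close> by (simp add: sumI Bx)
    qed
  qed
  show ?case unfolding invertible_on_def using AB BA by blast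
qed



lemma elpD:
  assumes "ext_link_pattern N L R P"
  shows "L \<subseteq> {..<N}" "R \<subseteq> {..<N}" "\<And>l r. l \<in> L \<Longrightarrow> r \<in> R \<Longrightarrow> l < r"
    "\<And>i j. (i,j) \<in> P \<Longrightarrow> i < j \<and> j < N \<and> i \<notin> L \<and> i \<notin> R \<and> j \<notin> L \<and> j \<notin> R"
    "\<And>x. x < N \<Longrightarrow> x \<notin> L \<Longrightarrow> x \<notin> R \<Longrightarrow> \<exists>!p. p \<in> P \<and> (x = fst p \<or> x = snd p)"
  using assms unfolding ext_link_pattern_def by (auto 0 3)

lemma pair_unique:
  assumes "ext_link_pattern N L R P" "(i,j) \<in> P" "(i',j') \<in> P"
    "i = i' \<or> i = j' \<or> j = i' \<or> j = j'"
  shows "i = i' \<and> j = j'"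
proof -
  from elpD(4)[OF assms(1,2)] elpD(4)[OF assms(1,3)] have h: "i < j" "j < N" "i \<notin> L" "i \<notin> R" "j \<notin> L" "j \<notin> R"
    "i' < j'" "j' < N" by auto
  consider "i = i' \<or> i = j'" | "j = i' \<or> j = j'" using assms(4) by blast
  then show ?thesis
  proof cases
    case 1
    have "\<exists>!p. p \<in> P \<and> (i = fst p \<or> i = snd p)" using elpD(5)[OF assms(1)] h by auto
    then have U: "\<And>p q. p \<in> P \<Longrightarrow> (i = fst p \<or> i = snd p) \<Longrightarrow> q \<in> P \<Longrightarrow> (i = fst q \<or> i = snd q) \<Longrightarrow> p = q" by blast
    have "(i,j) = (i',j')" by (rule U) (use assms(2,3) 1 in auto)
    then show ?thesis by simp
  next
    case 2
    have "\<exists>!p. p \<in> P \<and> (j = fst p \<or> j = snd p)" using elpD(5)[OF assms(1)] h by auto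
    then have U: "\<And>p q. p \<in> P \<Longrightarrow> (j = fst p \<or> j = snd p) \<Longrightarrow> q \<in> P \<Longrightarrow> (j = fst q \<or> j = snd q) \<Longrightarrow> p = q" by blast
    have "(i,j) = (i',j')" by (rule U) (use assms(2,3) 2 in auto)
    then show ?thesis by simp
  qed
qed

lemma elp_nth: "k < N \<Longrightarrow> elp_word N L R P ! k = (if k \<in> L then 1 else if k \<in> R then 0
                              else if (\<exists>j. (k,j) \<in> P) then 0 else 1)"
  unfolding elp_word_def by simp

lemma ss_nth: "k < N \<Longrightarrow> ss_word N L R P S ! k = (if k \<in> R \<or> (\<exists>j. (k,j) \<in> P - S) \<or> (\<exists>j. (j,k) \<in> S)
                               then 0 else 1)"
  unfolding ss_word_def by simp

lemma in_S:
  assumes E: "ext_link_pattern N L R P" and SP: "S \<subseteq> P" and ij: "(i,j) \<in> S"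
  shows "i < j" "j < N" "ss_word N L R P S ! i = 1" "elp_word N L R P ! i = 0"
    "ss_word N L R P S ! j = 0" "elp_word N L R P ! j = 1"
proof -
  have P: "(i,j) \<in> P" using SP ij by auto
  note h = elpD(4)[OF E P]
  show "i < j" "j < N" using h by auto
  have u: "\<And>a b. (a,b) \<in> P \<Longrightarrow> a = i \<or> a = j \<or> b = i \<or> b = j \<Longrightarrow> a = i \<and> b = j"
    using pair_unique[OF E P] by metis
  show "elp_word N L R P ! i = 0" using h by (simp add: elp_nth) (use P in blast)
  show "elp_word N L R P ! j = 1" using h u by (simp add: elp_nth) (metis less_irrefl)
  show "ss_word N L R P S ! j = 0" using h ij by (simp add: ss_nth) blast
  show "ss_word N L R P S ! i = 1" using h u SP ij by (simp add: ss_nth) (metis less_irrefl subsetD)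
qed

lemma not_in_S:
  assumes E: "ext_link_pattern N L R P" and SP: "S \<subseteq> P" and k: "k < N"
    and nk: "\<And>i j. (i,j) \<in> S \<Longrightarrow> k \<noteq> i \<and> k \<noteq> j"
  shows "ss_word N L R P S ! k = elp_word N L R P ! k"
proof -
  have notP: "\<And>a b. k \<in> L \<union> R \<Longrightarrow> (a,b) \<in> P \<Longrightarrow> k \<noteq> a \<and> k \<noteq> b"
    using elpD(4)[OF E] by blast
  show ?thesis
  proof (cases "k \<in> L")
    case True
    then have "k \<notin> R" using elpD(3)[OF E] by blast
    then show ?thesis using True notP SP k by (simp add: ss_nth elp_nth) blast
  next
    case nL: False
    show ?thesis
    proof (cases "k \<in> R")
      case True
      then show ?thesis using nL k by (simp add: ss_nth elp_nth)
    next
      case nR: False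
      obtain p where p: "p \<in> P" "k = fst p \<or> k = snd p" using elpD(5)[OF E k nL nR] by blast
      obtain a b where ab: "p = (a,b)" by fastforce
      have pS: "(a,b) \<notin> S" using nk p ab by auto
      have u: "\<And>c d. (c,d) \<in> P \<Longrightarrow> c = a \<or> c = b \<or> d = a \<or> d = b \<Longrightarrow> c = a \<and> d = b"
        using pair_unique[OF E, of a b] p ab by metis
      have lt: "a < b" using elpD(4)[OF E] p ab by blast
      show ?thesis
      proof (cases "k = a")
        case True
        then show ?thesis using nL nR k p ab pS by (simp add: ss_nth elp_nth) blast
      next
        case False
        then have kb: "k = b" using p ab by auto
        have n1: "\<not> (\<exists>j. (k,j) \<in> P)" using u kb lt by (metis less_irrefl)
        have n2: "\<not> (\<exists>j. (j,k) \<in> S)" using u kb pS SP by blast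
        show ?thesis using nL nR k n1 n2 by (simp add: ss_nth elp_nth)
      qed
    qed
  qed
qed

lemma witness_order:
  assumes E: "ext_link_pattern N L R P" and SP: "S \<subseteq> P" and Sne: "S \<noteq> {}"
  shows "elp_word N L R P < ss_word N L R P S"
proof -
  define w where "w = ss_word N L R P S"
  define w' where "w' = elp_word N L R P"
  have len: "length w = N" "length w' = N" unfolding w_def w'_def ss_word_def elp_word_def by auto
  define D where "D = {k. k < N \<and> w ! k \<noteq> w' ! k}"
  obtain i0 j0 where ij0: "(i0,j0) \<in> S" using Sne by auto
  have "i0 \<in> D" using in_S[OF E SP ij0] unfolding D_def w_def w'_def by auto
  then have Dne: "D \<noteq> {}" by auto
  have fD: "finite D" unfolding D_def by simp
  define k where "k = Min D"
  have kD: "k \<in> D" using Dne fD k_def by simp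
  have kmin: "\<And>t. t \<in> D \<Longrightarrow> k \<le> t" using fD k_def by simp
  obtain i j where ij: "(i,j) \<in> S" "k = i \<or> k = j"
    using kD not_in_S[OF E SP] unfolding D_def w_def w'_def by blast
  have "i \<in> D" using in_S[OF E SP ij(1)] unfolding D_def w_def w'_def by auto
  then have "k = i" using ij in_S(1)[OF E SP ij(1)] kmin by fastforce
  then have wk: "w ! k = 1" "w' ! k = 0" using in_S[OF E SP ij(1)] unfolding w_def w'_def by auto
  have kN: "k < N" using kD D_def by auto
  have tk: "take k w' = take k w"
  proof (rule nth_equalityI)
    show "length (take k w') = length (take k w)" using len by simp
    fix t assume "t < length (take k w')"
    then have "t < k" "t < N" using len kN by auto
    then have "t \<notin> D" using kmin by fastforce
    then show "take k w' ! t = take k w ! t" using \<open>t < k\<close> \<open>t < N\<close> D_def by auto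
  qed
  have "(w', w) \<in> lexord {(u, v). u < v}"
    unfolding lexord_take_index_conv using tk wk kN len by auto
  then show ?thesis unfolding w_def w'_def list_less_def .
qed



lemma ext0:
  assumes E: "ext_link_pattern N L R P"
  shows "ext_link_pattern (Suc N) L (insert N R) P"
proof -
  note d = elpD[OF E]
  have nc: "noncrossing P" and nb: "\<forall>(i,j)\<in>P. \<forall>x\<in>L \<union> R. \<not> (i < x \<and> x < j)"
    using E unfolding ext_link_pattern_def by auto
  show ?thesis unfolding ext_link_pattern_def
  proof (intro conjI)
    show "\<forall>x\<in>{..<Suc N} - (L \<union> insert N R). \<exists>!p. p \<in> P \<and> (x = fst p \<or> x = snd p)"
      using d(5) by auto
    show "\<forall>(i,j)\<in>P. \<forall>x\<in>L \<union> insert N R. \<not> (i < x \<and> x < j)"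
      using nb d(4) by fastforce
    show "L \<subseteq> {..<Suc N}" using d(1) by auto
    show "insert N R \<subseteq> {..<Suc N}" using d(2) by auto
    show "\<forall>l\<in>L. \<forall>r\<in>insert N R. l < r" using d(1,3) by auto
    show "\<forall>(i,j)\<in>P. i < j \<and> j < Suc N \<and> i \<notin> L \<union> insert N R \<and> j \<notin> L \<union> insert N R"
      using d(4) by fastforce
    show "noncrossing P" by (rule nc)
  qed
qed

lemma ext1a:
  assumes E: "ext_link_pattern N L R P" and R: "R = {}"
  shows "ext_link_pattern (Suc N) (insert N L) R P"
proof -
  note d = elpD[OF E]
  have nc: "noncrossing P" and nb: "\<forall>(i,j)\<in>P. \<forall>x\<in>L \<union> R. \<not> (i < x \<and> x < j)"
    using E unfolding ext_link_pattern_def by auto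
  show ?thesis unfolding ext_link_pattern_def
  proof (intro conjI)
    show "\<forall>x\<in>{..<Suc N} - (insert N L \<union> R). \<exists>!p. p \<in> P \<and> (x = fst p \<or> x = snd p)"
      using d(5) by auto
    show "\<forall>(i,j)\<in>P. \<forall>x\<in>insert N L \<union> R. \<not> (i < x \<and> x < j)"
      using nb d(4) by fastforce
    show "insert N L \<subseteq> {..<Suc N}" using d(1) by auto
    show "R \<subseteq> {..<Suc N}" using R by auto
    show "\<forall>l\<in>insert N L. \<forall>r\<in>R. l < r" using R by auto
    show "\<forall>(i,j)\<in>P. i < j \<and> j < Suc N \<and> i \<notin> insert N L \<union> R \<and> j \<notin> insert N L \<union> R"
      using d(4) by fastforce
    show "noncrossing P" by (rule nc)
  qed
qed

lemma ext1b:
  assumes E: "ext_link_pattern N L R P" and R: "R \<noteq> {}" and r: "r = Max R"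
  shows "ext_link_pattern (Suc N) L (R - {r}) (insert (r,N) P)"
proof -
  note d = elpD[OF E]
  have nc: "noncrossing P" and nb: "\<forall>(i,j)\<in>P. \<forall>x\<in>L \<union> R. \<not> (i < x \<and> x < j)"
    using E unfolding ext_link_pattern_def by auto
  have fR: "finite R" using d(2) finite_subset by blast
  have rR: "r \<in> R" using fR R r by simp
  have rmax: "\<And>x. x \<in> R \<Longrightarrow> x \<le> r" using fR r by simp
  have rN: "r < N" using rR d(2) by auto
  have rP: "\<And>a b. (a,b) \<in> P \<Longrightarrow> a \<noteq> r \<and> b \<noteq> r" using d(4) rR by blast
  show ?thesis unfolding ext_link_pattern_def
  proof (intro conjI)
    show "\<forall>x\<in>{..<Suc N} - (L \<union> (R - {r})). \<exists>!p. p \<in> insert (r,N) P \<and> (x = fst p \<or> x = snd p)"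
    proof
      fix x assume x: "x \<in> {..<Suc N} - (L \<union> (R - {r}))"
      show "\<exists>!p. p \<in> insert (r,N) P \<and> (x = fst p \<or> x = snd p)"
      proof (cases "x = r \<or> x = N")
        case True
        show ?thesis
        proof (rule ex1I[of _ "(r,N)"])
          show "(r,N) \<in> insert (r,N) P \<and> (x = fst (r,N) \<or> x = snd (r,N))" using True by auto
          fix p assume p: "p \<in> insert (r,N) P \<and> (x = fst p \<or> x = snd p)"
          show "p = (r,N)"
          proof (rule ccontr)
            assume "p \<noteq> (r,N)"
            then have "p \<in> P" using p by auto
            then show False using d(4)[of "fst p" "snd p"] rP[of "fst p" "snd p"] True p by auto
          qed
        qed
      next
        case False
        then have x2: "x < N" "x \<notin> L" "x \<notin> R" using x by auto
        obtain p where p: "p \<in> P" "x = fst p \<or> x = snd p" and pu: "\<And>q. q \<in> P \<Longrightarrow> x = fst q \<or> x = snd q \<Longrightarrow> q = p"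
          using d(5)[OF x2] by blast
        show ?thesis
        proof (rule ex1I[of _ p])
          show "p \<in> insert (r,N) P \<and> (x = fst p \<or> x = snd p)" using p by auto
          fix q assume q: "q \<in> insert (r,N) P \<and> (x = fst q \<or> x = snd q)"
          then have "q \<noteq> (r,N)" using False by auto
          then have "q \<in> P" using q by auto
          then show "q = p" using pu q by blast
        qed
      qed
    qed
    show "\<forall>(i,j)\<in>insert (r,N) P. \<forall>x\<in>L \<union> (R - {r}). \<not> (i < x \<and> x < j)"
    proof -
      have "\<forall>x\<in>L \<union> (R - {r}). \<not> (r < x \<and> x < N)"
        using d(3) rR rmax by fastforce
      then show ?thesis using nb by auto
    qed
    show "noncrossing (insert (r, N) P)"
      unfolding noncrossing_def
    proof (intro ballI, clarify)
      fix i k j l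
      assume a: "(i,k) \<in> insert (r,N) P" "(j,l) \<in> insert (r,N) P" "i < j" "j < k" "k < l"
      show False
      proof (cases "(i,k) = (r,N)")
        case True
        then show False using a d(4)[of j l] by auto
      next
        case False
        then have ik: "(i,k) \<in> P" using a by auto
        show False
        proof (cases "(j,l) = (r,N)")
          case True
          then show False using nb ik a rR by fastforce
        next
          case False
          then have "(j,l) \<in> P" using a by auto
          then show False using nc ik a unfolding noncrossing_def by fastforce
        qed
      qed
    qed
    show "L \<subseteq> {..<Suc N}" using d(1) by auto
    show "R - {r} \<subseteq> {..<Suc N}" using d(2) by auto
    show "\<forall>l\<in>L. \<forall>r\<in>R - {r}. l < r" using d(3) by auto
    show "\<forall>(i,j)\<in>insert (r,N) P. i < j \<and> j < Suc N \<and> i \<notin> L \<union> (R - {r}) \<and> j \<notin> L \<union> (R - {r})"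
    proof -
      have "r \<notin> L" "N \<notin> L" "N \<notin> R" using d(1,2,3) rR by auto
      then show ?thesis using d(4) rN by fastforce
    qed
  qed
qed



lemma elp_len[simp]: "length (elp_word N L R P) = N"
  unfolding elp_word_def by simp

lemma ss_len[simp]: "length (ss_word N L R P S) = N"
  unfolding ss_word_def by simp

lemma exists_elp:
  "set w \<subseteq> {0,1} \<Longrightarrow> \<exists>L R P. ext_link_pattern (length w) L R P \<and> elp_word (length w) L R P = w"
proof (induction w rule: rev_induct)
  case Nil
  have "ext_link_pattern 0 {} {} {}" unfolding ext_link_pattern_def noncrossing_def by simp
  then show ?case unfolding elp_word_def by auto
next
  case (snoc c w)
  define N where "N = length w"
  obtain L R P where E: "ext_link_pattern N L R P" and W: "elp_word N L R P = w"
    using snoc N_def by auto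
  note d = elpD[OF E]
  have c: "c = 0 \<or> c = 1" using snoc.prems by auto
  have old: "\<And>k. k < N \<Longrightarrow> w ! k = (if k \<in> L then 1 else if k \<in> R then 0
                              else if (\<exists>j. (k,j) \<in> P) then 0 else 1)"
    using W elp_nth by metis
  have NL: "N \<notin> L" "N \<notin> R" using d(1,2) by auto
  have NP: "\<And>j. (N,j) \<notin> P" using d(4) by fastforce
  have lenw: "length (w @ [c]) = Suc N" using N_def by simp
  have nth_wc: "\<And>k. k < Suc N \<Longrightarrow> (w @ [c]) ! k = (if k < N then w ! k else c)"
    using N_def by (simp add: nth_append)
  consider "c = 0" | "c = 1" "R = {}" | "c = 1" "R \<noteq> {}" using c by blast
  then show ?case
  proof cases
    case 1
    have "ext_link_pattern (Suc N) L (insert N R) P" by (rule ext0[OF E])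
    moreover have "elp_word (Suc N) L (insert N R) P = w @ [c]"
    proof (rule nth_equalityI)
      show "length (elp_word (Suc N) L (insert N R) P) = length (w @ [c])" using lenw by simp
      fix k assume "k < length (elp_word (Suc N) L (insert N R) P)"
      then have k: "k < Suc N" by simp
      show "elp_word (Suc N) L (insert N R) P ! k = (w @ [c]) ! k"
      proof (cases "k < N")
        case True
        then have "(w @ [c]) ! k = w ! k" using N_def by (simp add: nth_append)
        then show ?thesis using True 1 by (simp add: elp_nth old)
      next
        case False
        then have kN: "k = N" using k by simp
        have "(w @ [c]) ! N = c" using N_def by simp
        then show ?thesis using kN 1 NL by (simp add: elp_nth)
      qed
    qed
    ultimately show ?thesis using lenw by metis
  next
    case 2
    have "ext_link_pattern (Suc N) (insert N L) R P" by (rule ext1a[OF E 2(2)])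
    moreover have "elp_word (Suc N) (insert N L) R P = w @ [c]"
    proof (rule nth_equalityI)
      show "length (elp_word (Suc N) (insert N L) R P) = length (w @ [c])" using lenw by simp
      fix k assume "k < length (elp_word (Suc N) (insert N L) R P)"
      then have k: "k < Suc N" by simp
      show "elp_word (Suc N) (insert N L) R P ! k = (w @ [c]) ! k"
      proof (cases "k < N")
        case True
        then have "(w @ [c]) ! k = w ! k" using N_def by (simp add: nth_append)
        then show ?thesis using True 2 by (simp add: elp_nth old)
      next
        case False
        then have kN: "k = N" using k by simp
        have "(w @ [c]) ! N = c" using N_def by simp
        then show ?thesis using kN 2 NL by (simp add: elp_nth)
      qed
    qed
    ultimately show ?thesis using lenw by metis
  next
    case 3
    define r where "r = Max R"
    have fR: "finite R" using d(2) finite_subset by blast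
    have rR: "r \<in> R" using fR 3 r_def by simp
    have rL: "r \<notin> L" using d(3) rR by blast
    have "ext_link_pattern (Suc N) L (R - {r}) (insert (r,N) P)" by (rule ext1b[OF E 3(2) r_def])
    moreover have "elp_word (Suc N) L (R - {r}) (insert (r,N) P) = w @ [c]"
    proof (rule nth_equalityI)
      show "length (elp_word (Suc N) L (R - {r}) (insert (r,N) P)) = length (w @ [c])" using lenw by simp
      fix k assume "k < length (elp_word (Suc N) L (R - {r}) (insert (r,N) P))"
      then have k: "k < Suc N" by simp
      show "elp_word (Suc N) L (R - {r}) (insert (r,N) P) ! k = (w @ [c]) ! k"
      proof (cases "k < N")
        case True
        have wk: "(w @ [c]) ! k = w ! k" using True N_def by (simp add: nth_append)
        show ?thesis
        proof (cases "k = r")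
          case True
          then show ?thesis using k \<open>k < N\<close> rR rL wk by (auto simp add: elp_nth old)
        next
          case False
          then show ?thesis using k \<open>k < N\<close> wk by (simp add: elp_nth old)
        qed
      next
        case False
        then have "k = N" using k by simp
        have "(w @ [c]) ! N = c" using N_def by simp
        then show ?thesis using \<open>k = N\<close> NL NP 3(1) rR by (auto simp add: elp_nth)
      qed
    qed
    ultimately show ?thesis using lenw by metis
  qed
qed



lemma ss_empty:
  assumes E: "ext_link_pattern N L R P"
  shows "ss_word N L R P {} = elp_word N L R P"
proof (rule nth_equalityI)
  show "length (ss_word N L R P {}) = length (elp_word N L R P)" by simp
  fix k assume "k < length (ss_word N L R P {})"
  then have k: "k < N" by simp
  show "ss_word N L R P {} ! k = elp_word N L R P ! k"
    by (rule not_in_S[OF E _ k]) auto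
qed

lemma feasible_order:
  assumes "feasible N w w'"
  shows "w = w' \<or> w' < w"
proof -
  obtain L R P S where E: "ext_link_pattern N L R P" and SP: "S \<subseteq> P"
    and W: "elp_word N L R P = w'" "ss_word N L R P S = w"
    using assms unfolding feasible_def by blast
  show ?thesis
  proof (cases "S = {}")
    case True
    then have "w = w'" using ss_empty[OF E] W by metis
    then show ?thesis by blast
  next
    case False
    have "w' < w" using witness_order[OF E SP False] unfolding W .
    then show ?thesis by blast
  qed
qed

lemma g_diag:
  assumes "feasible N w w"
  shows "g N w w = 0"
  unfolding g_def
proof (rule the_equality)
  obtain L R P S where E: "ext_link_pattern N L R P" and SP: "S \<subseteq> P"
    and W: "elp_word N L R P = w" "ss_word N L R P S = w"
    using assms unfolding feasible_def by blast
  have "S = {}"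
  proof (rule ccontr)
    assume Sne: "S \<noteq> {}"
    have "w < w" using witness_order[OF E SP Sne] unfolding W .
    then show False using less_irrefl by blast
  qed
  then show "\<exists>L R P S. ext_link_pattern N L R P \<and> S \<subseteq> P \<and> elp_word N L R P = w \<and> ss_word N L R P S = w \<and> card S = 0"
    using E SP W \<open>S = {}\<close> by (intro exI[of _ L] exI[of _ R] exI[of _ P] exI[of _ S]) simp
next
  fix k assume "\<exists>L R P S. ext_link_pattern N L R P \<and> S \<subseteq> P \<and> elp_word N L R P = w \<and> ss_word N L R P S = w \<and> card S = k"
  then obtain L R P S where E: "ext_link_pattern N L R P" and SP: "S \<subseteq> P"
    and W: "elp_word N L R P = w" "ss_word N L R P S = w" and k: "card S = k" by (elim exE conjE)
  have "S = {}"
  proof (rule ccontr)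
    assume Sne: "S \<noteq> {}"
    have "w < w" using witness_order[OF E SP Sne] unfolding W .
    then show False using less_irrefl by blast
  qed
  then show "k = 0" using k by simp
qed

lemma feasible_diag:
  assumes "set w \<subseteq> {0,1}"
  shows "feasible (length w) w w"
proof -
  obtain L R P where E: "ext_link_pattern (length w) L R P" and W: "elp_word (length w) L R P = w"
    using exists_elp[OF assms] by blast
  show ?thesis unfolding feasible_def
    using E W ss_empty[OF E] by (intro exI[of _ L] exI[of _ R] exI[of _ P] exI[of _ "{}"]) simp
qed



theorem proposition2p8:
  fixes N0 N1 :: nat
  shows "invertible_on (words N0 N1) (M N0 N1)"
proof (rule tri_invertible)
  have "words N0 N1 \<subseteq> {xs. set xs \<subseteq> {0,1} \<and> length xs = N0 + N1}"
    unfolding words_def by auto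
  moreover have "finite {xs. set xs \<subseteq> {0::nat,1} \<and> length xs = N0 + N1}"
    by (rule finite_lists_length_eq) simp
  ultimately show "finite (words N0 N1)" by (rule finite_subset)
next
  fix x assume x: "x \<in> words N0 N1"
  then have "set x \<subseteq> {0,1}" "length x = N0 + N1" unfolding words_def by auto
  then have f: "feasible (N0 + N1) x x" using feasible_diag by metis
  show "M N0 N1 x x = 1" unfolding M_def using f g_diag[OF f] by simp
next
  fix x y assume "M N0 N1 x y \<noteq> 0"
  then have "feasible (N0 + N1) x y" unfolding M_def by (auto split: if_splits)
  then show "x = y \<or> y < x" by (rule feasible_order)
qed


end
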